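(* In the setting where $K$ is the Erdős–Rényi random graph on ${\cal V}=\{1,\ldots,n\}$ ($n\ge2$) with edge probability $p\in(0,1)$, $Y$ its number of isolated vertices, $V$ uniform on ${\cal V}$ independent of $K$, $K^s$ obtained from $K$ by deleting all edges incident to $V$, and $Y^s$ the number of isolated vertices of $K^s$, for every $\theta\ge 0$, $$E\big(e^{\theta Y^s}-e^{\theta Y}\big)\le \frac{\theta\gamma_\theta}{2}\,E\big(e^{\theta Y}\big),\qquad \gamma_\theta=e^\theta(pe^\theta+1-p)^{n-2}(npe^\theta+1-p)+(n-1)p+1,$$ and consequently $\frac{d}{d\theta}E(e^{\theta Y})\le \mu\big(1+\tfrac{\theta\gamma_\theta}{2}\big)E(e^{\theta Y})$ for $\theta\ge0$, where $\mu=EY$. Moreover, for every $\theta<0$, $E(e^{\theta Y}-e^{\theta Y^s})\le 2|\theta|E(e^{\theta Y})$ and $\frac{d}{d\theta}E(e^{\theta Y})\ge \mu(1+2\theta)E(e^{\theta Y})$.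
   Context: The Erdős–Rényi random graph on ${\cal V}$ with edge probability $p$ has independent Bernoulli($p$) edge indicators for all unordered pairs of distinct vertices; an isolated vertex is one of degree $0$. *)

theory Defs
  imports "HOL-Analysis.Analysis"
begin

definition vpairs :: "nat \<Rightarrow> nat set set" where
  "vpairs n = {{i, j} | i j. i \<in> {1..n} \<and> j \<in> {1..n} \<and> i \<noteq> j}"

definition graphs :: "nat \<Rightarrow> nat set set set" where
  "graphs n = Pow (vpairs n)"

text \<open>Erdos-Renyi probability of the edge set G: independent Bernoulli(p) indicators.\<close>
definition er_prob :: "nat \<Rightarrow> real \<Rightarrow> nat set set \<Rightarrow> real" where
  "er_prob n p G = p ^ card G * (1 - p) ^ (card (vpairs n) - card G)"

definition num_isolated :: "nat \<Rightarrow> nat set set \<Rightarrow> nat" where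
  "num_isolated n G = card {v \<in> {1..n}. \<forall>e\<in>G. v \<notin> e}"

definition delete_incident :: "nat set set \<Rightarrow> nat \<Rightarrow> nat set set" where
  "delete_incident G v = {e \<in> G. v \<notin> e}"

definition mgf_Y :: "nat \<Rightarrow> real \<Rightarrow> real \<Rightarrow> real" where
  "mgf_Y n p \<theta> = (\<Sum>G\<in>graphs n. er_prob n p G * exp (\<theta> * real (num_isolated n G)))"

text \<open>E(e^{\<theta> Y^s}), with V uniform on {1..n} independent of K.\<close>
definition mgf_Ys :: "nat \<Rightarrow> real \<Rightarrow> real \<Rightarrow> real" where
  "mgf_Ys n p \<theta> = (\<Sum>G\<in>graphs n. \<Sum>v\<in>{1..n}.
      er_prob n p G * (1 / real n) * exp (\<theta> * real (num_isolated n (delete_incident G v))))"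

definition mean_Y :: "nat \<Rightarrow> real \<Rightarrow> real" where
  "mean_Y n p = (\<Sum>G\<in>graphs n. er_prob n p G * real (num_isolated n G))"

definition gamma_theta :: "nat \<Rightarrow> real \<Rightarrow> real \<Rightarrow> real" where
  "gamma_theta n p \<theta> = exp \<theta> * (p * exp \<theta> + 1 - p) ^ (n - 2) * (real n * p * exp \<theta> + 1 - p)
     + (real n - 1) * p + 1"

end

theory Submission
  imports Defs
begin
definition wt :: "real \<Rightarrow> 'a set \<Rightarrow> 'a set \<Rightarrow> real" where
  "wt p X G = p ^ card G * (1 - p) ^ (card X - card G)"

lemma wt_mult:
  assumes "finite A" "finite B" "A \<inter> B = {}" "H \<subseteq> A" "S \<subseteq> B"
  shows "wt p A H * wt p B S = wt p (A \<union> B) (H \<union> S)"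
proof -
  have fH: "finite H" "finite S" using assms by (auto intro: finite_subset)
  have c1: "card (H \<union> S) = card H + card S"
    using fH assms by (intro card_Un_disjoint) auto
  have c2: "card (A \<union> B) = card A + card B" using assms by (intro card_Un_disjoint) auto
  have l1: "card H \<le> card A" "card S \<le> card B" using assms by (auto intro: card_mono)
  have "card A + card B - (card H + card S) = (card A - card H) + (card B - card S)"
    using l1 by simp
  then show ?thesis unfolding wt_def c1 c2 by (simp add: power_add algebra_simps)
qed

lemma decomp:
  assumes "finite A" "finite B" "A \<inter> B = {}"
  shows "(\<Sum>G\<in>Pow (A\<union>B). wt p (A\<union>B) G * f G)
       = (\<Sum>H\<in>Pow A. \<Sum>S\<in>Pow B. wt p A H * wt p B S * f (H\<union>S))"
proof -
  have inj: "inj_on (\<lambda>(H,S). H \<union> S) (Pow A \<times> Pow B)"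
  proof (rule inj_onI, clarify)
    fix H S H' S' assume h: "H \<subseteq> A" "S \<subseteq> B" "H' \<subseteq> A" "S' \<subseteq> B" "H \<union> S = H' \<union> S'"
    then have "H = (H\<union>S) \<inter> A" "H' = (H'\<union>S')\<inter>A" "S = (H\<union>S)\<inter>B" "S'=(H'\<union>S')\<inter>B"
      using assms(3) by auto
    then show "H = H' \<and> S = S'" using h(5) by metis
  qed
  have img: "(\<lambda>(H,S). H \<union> S) ` (Pow A \<times> Pow B) = Pow (A\<union>B)"
  proof
    show "(\<lambda>(H,S). H \<union> S) ` (Pow A \<times> Pow B) \<subseteq> Pow (A\<union>B)" by auto
    show "Pow (A\<union>B) \<subseteq> (\<lambda>(H,S). H \<union> S) ` (Pow A \<times> Pow B)"
    proof
      fix G assume "G \<in> Pow (A \<union> B)"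
      then have "G = (\<lambda>(H,S). H \<union> S) (G \<inter> A, G \<inter> B)" "(G \<inter> A, G \<inter> B) \<in> Pow A \<times> Pow B" by auto
      then show "G \<in> (\<lambda>(H,S). H \<union> S) ` (Pow A \<times> Pow B)" by blast
    qed
  qed
  have bij: "bij_betw (\<lambda>(H,S). H \<union> S) (Pow A \<times> Pow B) (Pow (A\<union>B))"
    using inj img by (simp add: bij_betw_def)
  have "(\<Sum>H\<in>Pow A. \<Sum>S\<in>Pow B. wt p A H * wt p B S * f (H\<union>S))
      = (\<Sum>(H,S)\<in>Pow A \<times> Pow B. wt p (A\<union>B) (H\<union>S) * f (H\<union>S))"
    unfolding sum.cartesian_product
    by (intro sum.cong refl) (auto simp: wt_mult assms)
  also have "\<dots> = (\<Sum>G\<in>Pow (A\<union>B). wt p (A\<union>B) G * f G)"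
    using sum.reindex_bij_betw[OF bij, of "\<lambda>G. wt p (A\<union>B) G * f G"]
    by (simp add: case_prod_unfold)
  finally show ?thesis by simp
qed

lemma decomp1:
  assumes "finite X" "e \<in> X"
  shows "(\<Sum>G\<in>Pow X. wt p X G * f G)
       = (\<Sum>H\<in>Pow (X - {e}). wt p (X - {e}) H * ((1 - p) * f H + p * f (insert e H)))"
proof -
  have X: "X = (X - {e}) \<union> {e}" using assms by auto
  have "(\<Sum>G\<in>Pow X. wt p X G * f G) = (\<Sum>G\<in>Pow ((X - {e}) \<union> {e}). wt p ((X - {e}) \<union> {e}) G * f G)"
    using X by simp
  also have "\<dots> = (\<Sum>H\<in>Pow (X - {e}). \<Sum>S\<in>Pow {e}. wt p (X - {e}) H * wt p {e} S * f (H\<union>S))"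
    using assms by (intro decomp) auto
  also have "\<dots> = (\<Sum>H\<in>Pow (X - {e}). wt p (X - {e}) H * ((1 - p) * f H + p * f (insert e H)))"
  proof (intro sum.cong refl)
    fix H assume "H \<in> Pow (X - {e})"
    have "Pow {e} = insert {e} {{}}" by auto
    then have "(\<Sum>S\<in>Pow {e}. wt p (X - {e}) H * wt p {e} S * f (H\<union>S))
        = wt p (X - {e}) H * wt p {e} {e} * f (H\<union>{e}) + wt p (X - {e}) H * wt p {e} {} * f (H\<union>{})"
      by simp
    also have "\<dots> = wt p (X - {e}) H * ((1 - p) * f H + p * f (insert e H))"
      by (simp add: wt_def algebra_simps)
    finally show "(\<Sum>S\<in>Pow {e}. wt p (X - {e}) H * wt p {e} S * f (H\<union>S)) = wt p (X - {e}) H * ((1 - p) * f H + p * f (insert e H))" .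
  qed
  finally show ?thesis .
qed


lemma wt_nonneg: "0 \<le> p \<Longrightarrow> p \<le> 1 \<Longrightarrow> 0 \<le> wt p X G"
  by (simp add: wt_def)

lemma prod_formula:
  assumes "finite B"
  shows "(\<Sum>S\<in>Pow B. wt p B S * x ^ card (S \<inter> M)) = (p * x + 1 - p) ^ card (B \<inter> M)"
  using assms
proof (induction B rule: finite_induct)
  case empty then show ?case by (simp add: wt_def)
next
  case (insert b B)
  have e: "insert b B - {b} = B" using insert by auto
  have "(\<Sum>S\<in>Pow (insert b B). wt p (insert b B) S * x ^ card (S \<inter> M))
     = (\<Sum>H\<in>Pow B. wt p B H * ((1 - p) * x ^ card (H \<inter> M) + p * x ^ card (insert b H \<inter> M)))"
    using decomp1[of "insert b B" b p "\<lambda>S. x ^ card (S \<inter> M)"] insert e by simp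
  also have "\<dots> = (\<Sum>H\<in>Pow B. wt p B H * x ^ card (H \<inter> M)) * (if b \<in> M then p * x + 1 - p else 1)"
    unfolding sum_distrib_right
  proof (intro sum.cong refl)
    fix H assume H: "H \<in> Pow B"
    then have "b \<notin> H" using insert by auto
    moreover have "finite (H \<inter> M)" using H insert by (auto intro: finite_subset)
    ultimately show "wt p B H * ((1 - p) * x ^ card (H \<inter> M) + p * x ^ card (insert b H \<inter> M)) =
         wt p B H * x ^ card (H \<inter> M) * (if b \<in> M then p * x + 1 - p else 1)"
      by (auto simp: algebra_simps)
  qed
  also have "\<dots> = (p * x + 1 - p) ^ card (insert b B \<inter> M)"
    using insert by (auto simp: insert.IH)
  finally show ?case .
qed

lemma total_mass: "finite B \<Longrightarrow> (\<Sum>S\<in>Pow B. wt p B S) = 1"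
  using prod_formula[of B p 1 "{}"] by simp

lemma count_formula:
  assumes "finite B"
  shows "(\<Sum>S\<in>Pow B. wt p B S * real (card (S \<inter> M))) = p * card (B \<inter> M)"
  using assms
proof (induction B rule: finite_induct)
  case empty then show ?case by (simp add: wt_def)
next
  case (insert b B)
  have e: "insert b B - {b} = B" using insert by auto
  have "(\<Sum>S\<in>Pow (insert b B). wt p (insert b B) S * real (card (S \<inter> M)))
     = (\<Sum>H\<in>Pow B. wt p B H * ((1 - p) * real (card (H \<inter> M)) + p * real (card (insert b H \<inter> M))))"
    using decomp1[of "insert b B" b p "\<lambda>S. real (card (S \<inter> M))"] insert e by simp
  also have "\<dots> = (\<Sum>H\<in>Pow B. wt p B H * real (card (H \<inter> M)) + wt p B H * (if b \<in> M then p else 0))"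
  proof (intro sum.cong refl)
    fix H assume H: "H \<in> Pow B"
    then have "b \<notin> H" using insert by auto
    moreover have "finite (H \<inter> M)" using H insert by (auto intro: finite_subset)
    ultimately show "wt p B H * ((1 - p) * real (card (H \<inter> M)) + p * real (card (insert b H \<inter> M))) =
         wt p B H * real (card (H \<inter> M)) + wt p B H * (if b \<in> M then p else 0)"
      by (auto simp: algebra_simps)
  qed
  also have "\<dots> = p * card (B \<inter> M) + (\<Sum>H\<in>Pow B. wt p B H) * (if b \<in> M then p else 0)"
    by (simp add: sum.distrib sum_distrib_right insert.IH)
  also have "\<dots> = p * card (insert b B \<inter> M)"
    using insert by (auto simp: total_mass algebra_simps)
  finally show ?case .
qed

lemma edge_le:
  assumes "finite X" "e \<in> X" "0 \<le> p" "p \<le> 1"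
    and mono: "\<And>H. H \<subseteq> X - {e} \<Longrightarrow> f (insert e H) \<le> f H"
  shows "(\<Sum>G\<in>Pow X. wt p X G * (if e \<in> G then f G else 0)) \<le> p * (\<Sum>G\<in>Pow X. wt p X G * f G)"
proof -
  have "(\<Sum>G\<in>Pow X. wt p X G * (if e \<in> G then f G else 0))
      = (\<Sum>H\<in>Pow (X - {e}). wt p (X - {e}) H * ((1 - p) * (if e \<in> H then f H else 0) + p * f (insert e H)))"
    using decomp1[OF assms(1,2), of p "\<lambda>G. if e \<in> G then f G else 0"] by simp
  also have "\<dots> = p * (\<Sum>H\<in>Pow (X - {e}). wt p (X - {e}) H * f (insert e H))"
    unfolding sum_distrib_left by (intro sum.cong refl) auto
  also have "\<dots> \<le> p * (\<Sum>H\<in>Pow (X - {e}). wt p (X - {e}) H * ((1 - p) * f H + p * f (insert e H)))"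
  proof -
   have "(\<Sum>H\<in>Pow (X - {e}). wt p (X - {e}) H * f (insert e H)) \<le> (\<Sum>H\<in>Pow (X - {e}). wt p (X - {e}) H * ((1 - p) * f H + p * f (insert e H)))"
   proof (rule sum_mono)
    fix H assume H: "H \<in> Pow (X - {e})"
    have "0 \<le> (1-p)*(f H - f (insert e H))" using mono[of H] H assms(3,4) by (intro mult_nonneg_nonneg) auto
    then have "f (insert e H) \<le> (1 - p) * f H + p * f (insert e H)"
      by (simp add: algebra_simps)
    then show "wt p (X - {e}) H * f (insert e H) \<le> wt p (X - {e}) H * ((1 - p) * f H + p * f (insert e H))"
      by (intro mult_left_mono wt_nonneg assms)
   qed
   then show ?thesis using assms(3) by (rule mult_left_mono)
  qed
  also have "\<dots> = p * (\<Sum>G\<in>Pow X. wt p X G * f G)"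
    using decomp1[OF assms(1,2), of p f] by simp
  finally show ?thesis .
qed


definition Iso :: "nat \<Rightarrow> nat set set \<Rightarrow> nat set" where
  "Iso n G = {u\<in>{1..n}. \<forall>e\<in>G. u \<notin> e}"

definition Xs :: "nat \<Rightarrow> nat set set \<Rightarrow> nat \<Rightarrow> nat set" where
  "Xs n G v = {u\<in>{1..n}. u \<noteq> v \<and> {v,u} \<in> G \<and> (\<forall>e\<in>G. u \<in> e \<longrightarrow> e = {v,u})}"

lemma num_iso: "num_isolated n G = card (Iso n G)"
  by (simp add: num_isolated_def Iso_def)

lemma Iso_sub: "Iso n G \<subseteq> {1..n}" by (auto simp: Iso_def)
lemma Iso_fin: "finite (Iso n G)" using Iso_sub finite_subset by blast
lemma Iso_anti: "G \<subseteq> G' \<Longrightarrow> Iso n G' \<subseteq> Iso n G" by (auto simp: Iso_def)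
lemma Y_anti: "G \<subseteq> G' \<Longrightarrow> num_isolated n G' \<le> num_isolated n G"
  unfolding num_iso by (intro card_mono Iso_fin Iso_anti)

lemma vpairs_sub: "vpairs n \<subseteq> Pow {1..n}" by (auto simp: vpairs_def)
lemma vpairs_fin: "finite (vpairs n)" using vpairs_sub finite_subset by blast
lemma vpairs_pair:
  assumes "e \<in> vpairs n" "v \<in> e" "u \<in> e" "u \<noteq> v" shows "e = {v,u}"
proof -
  obtain i j where "e = {i,j}" using assms(1) unfolding vpairs_def by blast
  then show ?thesis using assms(2-4) by auto
qed
lemma pair_in: "v\<in>{1..n} \<Longrightarrow> u\<in>{1..n} \<Longrightarrow> u\<noteq>v \<Longrightarrow> {v,u} \<in> vpairs n"
  unfolding vpairs_def by blast

lemma del_sub: "Iso n G \<subseteq> Iso n (delete_incident G v)"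
  by (intro Iso_anti) (auto simp: delete_incident_def)

lemma del_sup:
  assumes "G \<subseteq> vpairs n"
  shows "Iso n (delete_incident G v) \<subseteq> Iso n G \<union> {v} \<union> Xs n G v"
proof
  fix u assume u: "u \<in> Iso n (delete_incident G v)"
  show "u \<in> Iso n G \<union> {v} \<union> Xs n G v"
  proof (cases "u \<in> Iso n G \<or> u = v")
    case True then show ?thesis by auto
  next
    case False
    then have uv: "u \<noteq> v" and "u \<notin> Iso n G" by auto
    from u have u1: "u \<in> {1..n}" by (auto simp: Iso_def)
    with \<open>u \<notin> Iso n G\<close> obtain e where e: "e \<in> G" "u \<in> e" unfolding Iso_def by blast
    have all: "e' = {v,u}" if "e' \<in> G" "u \<in> e'" for e'
    proof -
      have "v \<in> e'" using u that unfolding Iso_def delete_incident_def by blast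
      moreover have "e' \<in> vpairs n" using that assms by auto
      ultimately show ?thesis using that uv vpairs_pair by metis
    qed
    have vu: "{v,u} \<in> G" using all[OF e] e(1) by simp
    have "u \<in> Xs n G v" unfolding Xs_def using all uv u1 vu by blast
    then show ?thesis by auto
  qed
qed

lemma Y_del_le:
  assumes "G \<subseteq> vpairs n"
  shows "real (num_isolated n (delete_incident G v)) \<le> real (num_isolated n G) + 1 + real (card (Xs n G v))"
proof -
  have fX: "finite (Xs n G v)" by (auto simp: Xs_def)
  have "card (Iso n (delete_incident G v)) \<le> card (Iso n G \<union> {v} \<union> Xs n G v)"
    by (intro card_mono del_sup assms) (auto simp: Iso_fin fX)
  also have "\<dots> \<le> card (Iso n G \<union> {v}) + card (Xs n G v)" by (rule card_Un_le)
  also have "\<dots> \<le> card (Iso n G) + 1 + card (Xs n G v)"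
    using card_Un_le[of "Iso n G" "{v}"] by simp
  finally show ?thesis unfolding num_iso by linarith
qed

lemma Y_del_ge: "num_isolated n G \<le> num_isolated n (delete_incident G v)"
  unfolding num_iso by (intro card_mono Iso_fin del_sub)

lemma Xs_card_le:
  assumes "finite G"
  shows "card (Xs n G v) \<le> card {e\<in>G. v \<in> e}"
proof (rule card_inj_on_le[of "\<lambda>u. {v,u}"])
  show "inj_on (\<lambda>u. {v, u}) (Xs n G v)" by (auto simp: inj_on_def doubleton_eq_iff)
  show "(\<lambda>u. {v, u}) ` Xs n G v \<subseteq> {e \<in> G. v \<in> e}" by (auto simp: Xs_def)
  show "finite {e \<in> G. v \<in> e}" using assms by auto
qed

lemma Xs_sum_le:
  assumes "G \<subseteq> vpairs n"
  shows "(\<Sum>v\<in>{1..n}. card (Xs n G v)) \<le> n"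
proof -
  have "(\<Sum>v\<in>{1..n}. card (Xs n G v)) = card (SIGMA v:{1..n}. Xs n G v)"
    by (rule card_SigmaI[symmetric]) (auto simp: Xs_def)
  also have "\<dots> \<le> card {1..n}"
  proof (rule card_inj_on_le[of snd])
    show "inj_on snd (SIGMA v:{1..n}. Xs n G v)"
    proof (rule inj_onI)
      fix x y assume hx: "x \<in> (SIGMA v:{1..n}. Xs n G v)" and hy: "y \<in> (SIGMA v:{1..n}. Xs n G v)"
        and e: "snd x = snd y"
      obtain v u where x: "x = (v,u)" by (cases x)
      obtain v' u' where y: "y = (v',u')" by (cases y)
      have h: "u \<in> Xs n G v" "u \<in> Xs n G v'" using hx hy e x y by auto
      then have "{v',u} = {v,u}" "u \<noteq> v" "u \<noteq> v'" unfolding Xs_def by blast+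
      then have "v = v'" by (auto simp: doubleton_eq_iff)
      then show "x = y" using x y e by simp
    qed
    show "snd ` (SIGMA v:{1..n}. Xs n G v) \<subseteq> {1..n}" by (auto simp: Xs_def)
  qed simp
  finally show ?thesis by simp
qed


definition Av :: "nat \<Rightarrow> nat \<Rightarrow> nat set set" where "Av n v = {e\<in>vpairs n. v \<notin> e}"
definition Bv :: "nat \<Rightarrow> nat \<Rightarrow> nat set set" where "Bv n v = {e\<in>vpairs n. v \<in> e}"

lemma AB_un: "vpairs n = Av n v \<union> Bv n v" by (auto simp: Av_def Bv_def)
lemma AB_dis: "Av n v \<inter> Bv n v = {}" by (auto simp: Av_def Bv_def)
lemma Av_fin: "finite (Av n v)" using vpairs_fin by (auto simp: Av_def)
lemma Bv_fin: "finite (Bv n v)" using vpairs_fin by (auto simp: Bv_def)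

lemma er_wt: "er_prob n p G = wt p (vpairs n) G" by (simp add: er_prob_def wt_def)

lemma decompv:
  "(\<Sum>G\<in>graphs n. er_prob n p G * f G)
     = (\<Sum>H\<in>Pow (Av n v). \<Sum>S\<in>Pow (Bv n v). wt p (Av n v) H * wt p (Bv n v) S * f (H\<union>S))"
  unfolding graphs_def er_wt AB_un[of n v] by (rule decomp[OF Av_fin Bv_fin AB_dis])

lemma card_Bv:
  assumes "v \<in> {1..n}" shows "card (Bv n v) = n - 1"
proof -
  have img: "Bv n v = (\<lambda>u. {v,u}) ` ({1..n} - {v})"
  proof
    show "Bv n v \<subseteq> (\<lambda>u. {v,u}) ` ({1..n} - {v})"
    proof
      fix e assume "e \<in> Bv n v"
      then obtain i j where ij: "e = {i,j}" "i \<in> {1..n}" "j \<in> {1..n}" "i \<noteq> j" "v \<in> e"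
        unfolding Bv_def vpairs_def by blast
      show "e \<in> (\<lambda>u. {v,u}) ` ({1..n} - {v})"
      proof (cases "v = i")
        case True then show ?thesis using ij by (intro image_eqI[of _ _ j]) auto
      next
        case False then have "v = j" using ij by auto
        then show ?thesis using ij by (intro image_eqI[of _ _ i]) auto
      qed
    qed
    show "(\<lambda>u. {v,u}) ` ({1..n} - {v}) \<subseteq> Bv n v"
      using assms pair_in by (auto simp: Bv_def)
  qed
  have "inj_on (\<lambda>u. {v,u}) ({1..n} - {v})" by (auto simp: inj_on_def doubleton_eq_iff)
  then have "card (Bv n v) = card ({1..n} - {v})" unfolding img by (rule card_image)
  then show ?thesis using assms by simp
qed

lemma del_HS: "H \<subseteq> Av n v \<Longrightarrow> S \<subseteq> Bv n v \<Longrightarrow> delete_incident (H\<union>S) v = H"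
  by (auto simp: delete_incident_def Av_def Bv_def)

lemma v_iso_HS:
  assumes "v \<in> {1..n}" "H \<subseteq> Av n v" "S \<subseteq> Bv n v"
  shows "(v \<in> Iso n (H\<union>S)) = (S = {})"
  using assms unfolding Iso_def Av_def Bv_def by blast

lemma wt_empty: "wt p B {} = (1 - p) ^ card B" by (simp add: wt_def)

lemma sizebias:
  assumes v: "v \<in> {1..n}"
  shows "(\<Sum>G\<in>graphs n. er_prob n p G * (if v \<in> Iso n G then f G else 0))
       = (1 - p) ^ (n - 1) * (\<Sum>G\<in>graphs n. er_prob n p G * f (delete_incident G v))"
proof -
  have "(\<Sum>G\<in>graphs n. er_prob n p G * (if v \<in> Iso n G then f G else 0))
     = (\<Sum>H\<in>Pow (Av n v). \<Sum>S\<in>Pow (Bv n v). wt p (Av n v) H * wt p (Bv n v) S * (if v \<in> Iso n (H\<union>S) then f (H\<union>S) else 0))"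
    by (rule decompv)
  also have "\<dots> = (\<Sum>H\<in>Pow (Av n v). \<Sum>S\<in>Pow (Bv n v). if S = {} then wt p (Av n v) H * wt p (Bv n v) S * f H else 0)"
    by (intro sum.cong refl) (use v v_iso_HS in auto)
  also have "\<dots> = (\<Sum>H\<in>Pow (Av n v). wt p (Av n v) H * (1 - p) ^ (n - 1) * f H)"
    by (intro sum.cong refl) (simp add: sum.delta Bv_fin wt_empty card_Bv[OF v])
  also have "\<dots> = (1 - p) ^ (n - 1) * (\<Sum>H\<in>Pow (Av n v). \<Sum>S\<in>Pow (Bv n v). wt p (Av n v) H * wt p (Bv n v) S * f H)"
  proof -
    have eq: "(\<Sum>S\<in>Pow (Bv n v). wt p (Av n v) H * wt p (Bv n v) S * f H) = wt p (Av n v) H * f H" for H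
    proof -
      have "(\<Sum>S\<in>Pow (Bv n v). wt p (Av n v) H * wt p (Bv n v) S * f H) = wt p (Av n v) H * f H * (\<Sum>S\<in>Pow (Bv n v). wt p (Bv n v) S)"
        by (simp add: sum_distrib_left algebra_simps)
      also have "\<dots> = wt p (Av n v) H * f H" by (simp add: total_mass Bv_fin)
      finally show ?thesis .
    qed
    show ?thesis by (simp only: eq) (simp add: sum_distrib_left mult_ac)
  qed
  also have "\<dots> = (1 - p) ^ (n - 1) * (\<Sum>H\<in>Pow (Av n v). \<Sum>S\<in>Pow (Bv n v). wt p (Av n v) H * wt p (Bv n v) S * f (delete_incident (H\<union>S) v))"
    by (intro arg_cong[where f="\<lambda>x. _ * x"] sum.cong refl) (simp add: del_HS)
  also have "\<dots> = (1 - p) ^ (n - 1) * (\<Sum>G\<in>graphs n. er_prob n p G * f (delete_incident G v))"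
    using decompv[of n p "\<lambda>G. f (delete_incident G v)" v] by simp
  finally show ?thesis .
qed


lemma exp_conv:
  fixes d :: real assumes "0 \<le> d" shows "exp d - 1 \<le> d * (1 + exp d) / 2"
proof -
  let ?g = "\<lambda>x::real. x * (1 + exp x) / 2 - exp x + 1"
  have "?g 0 \<le> ?g d"
  proof (rule DERIV_nonneg_imp_nondecreasing[OF assms])
    fix x :: real assume "0 \<le> x" "x \<le> d"
    have D: "DERIV ?g x :> ((1 + exp x) / 2 + x * exp x / 2 - exp x)"
      by (rule derivative_eq_intros refl | simp)+
    have "1 - x \<le> exp (- x)" using exp_ge_add_one_self[of "-x"] by simp
    then have "(1 - x) * exp x \<le> exp (-x) * exp x" by (intro mult_right_mono) auto
    then have "(1 - x) * exp x \<le> 1" by (simp add: exp_minus field_simps)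
    then have "0 \<le> (1 + exp x) / 2 + x * exp x / 2 - exp x" by (simp add: field_simps)
    with D show "\<exists>y. DERIV ?g x :> y \<and> 0 \<le> y" by blast
  qed
  then show ?thesis by simp
qed

lemma exp_conv2:
  fixes a b :: real assumes "a \<le> b" shows "exp b - exp a \<le> (b - a) * (exp a + exp b) / 2"
proof -
  have "exp b - exp a = exp a * (exp (b - a) - 1)" by (simp add: exp_diff field_simps)
  also have "\<dots> \<le> exp a * ((b - a) * (1 + exp (b - a)) / 2)"
    using exp_conv[of "b - a"] assms by (intro mult_left_mono) auto
  also have "\<dots> = (b - a) * (exp a + exp b) / 2" by (simp add: exp_diff field_simps)
  finally show ?thesis .
qed

lemma key_scalar:
  fixes p t :: real and n k :: nat
  assumes n: "n \<ge> 2" and p: "0 < p" "p < 1" and t: "0 \<le> t" and k: "k \<le> n - 1"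
  shows "1 + p * k \<le> (p * exp t + 1 - p) ^ (n - 2) * (real n * p * exp t + 1 - p) * (p * exp (-t) + 1 - p) ^ k"
proof -
  define x where "x = exp t"
  define q where "q = p * x + 1 - p"
  define r where "r = p * exp (-t) + 1 - p"
  have x1: "1 \<le> x" using t by (simp add: x_def)
  have xp: "0 < x" by (simp add: x_def)
  have q1: "1 \<le> q" using x1 p mult_left_mono[of 1 x p] by (simp add: q_def)
  have qx: "q \<le> x"
  proof -
    have "(1-p)*1 \<le> (1-p)*x" using x1 p by (intro mult_left_mono) auto
    then show ?thesis by (simp add: q_def algebra_simps)
  qed
  have r0: "0 \<le> r"
  proof -
    have "0 \<le> p * exp (-t)" using p by simp
    then show ?thesis using p unfolding r_def by linarith
  qed
  have rr: "r = p / x + 1 - p" by (simp add: r_def x_def exp_minus field_simps)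
  have qr: "1 \<le> q * r"
  proof -
    have "x + 1 / x \<ge> 2"
    proof -
      have "0 \<le> (x - 1)^2 / x" using xp by simp
      also have "(x - 1)^2 / x = x + 1 / x - 2" using xp by (simp add: field_simps power2_eq_square)
      finally show ?thesis by simp
    qed
    then have "p * (1 - p) * 2 \<le> p * (1 - p) * (x + 1 / x)" using p by (intro mult_left_mono) auto
    moreover have "q * r = p^2 + (1-p)^2 + p * (1 - p) * (x + 1 / x)"
      unfolding rr q_def using xp by (simp add: field_simps power2_eq_square)
    ultimately show ?thesis by (simp add: power2_eq_square algebra_simps)
  qed
  define C where "C = q ^ (n - 2) * (real n * p * x + 1 - p)"
  have main: "(1 + p * k) * q ^ k \<le> C"
  proof (cases "k \<le> n - 2")
    case True
    have "1 + p * k \<le> real n * p * x + 1 - p"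
    proof -
      have "p * k \<le> p * (real n - 1)" using True n p by (intro mult_left_mono) auto
      also have "\<dots> \<le> real n * p * x - p"
      proof -
        have "(p * real n) * 1 \<le> (p * real n) * x" using x1 p by (intro mult_left_mono) auto
        then show ?thesis by (simp add: algebra_simps)
      qed
      finally show ?thesis by simp
    qed
    moreover have "q ^ k \<le> q ^ (n - 2)" using q1 True by (intro power_increasing) auto
    moreover have "0 \<le> real n * p * x" using p xp by simp
    then have "0 \<le> real n * p * x + 1 - p" using p by linarith
    ultimately have "(1 + p * k) * q ^ k \<le> (real n * p * x + 1 - p) * q ^ (n - 2)" using q1 p
      by (intro mult_mono) auto
    then show ?thesis unfolding C_def by (simp add: mult.commute)
  next
    case False
    then have kk: "k = n - 1" using k by simp
    have "(1 + p * k) * q = q + p * (real n - 1) * q" using kk n by (simp add: algebra_simps of_nat_diff)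
    also have "\<dots> \<le> q + p * (real n - 1) * x" using qx p n by (intro add_left_mono mult_left_mono) auto
    also have "\<dots> = real n * p * x + 1 - p" by (simp add: q_def algebra_simps)
    finally have A: "(1 + p * k) * q \<le> real n * p * x + 1 - p" .
    have "q ^ k = q * q ^ (n - 2)" using kk n by (simp add: power_Suc[symmetric] Suc_diff_Suc numeral_2_eq_2)
    then have "(1 + p * k) * q ^ k = ((1 + p * k) * q) * q ^ (n - 2)" by simp
    also have "\<dots> \<le> (real n * p * x + 1 - p) * q ^ (n - 2)" using A q1 by (intro mult_right_mono) auto
    finally show ?thesis by (simp add: C_def mult.commute)
  qed
  have "1 + p * k \<le> (1 + p * k) * (q * r) ^ k"
  proof -
    have "1 \<le> (q * r) ^ k" using qr by (simp add: one_le_power)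
    moreover have "0 \<le> 1 + p * k" using p by simp
    ultimately show ?thesis by (metis mult_left_mono mult.right_neutral)
  qed
  also have "\<dots> = ((1 + p * k) * q ^ k) * r ^ k" by (simp add: power_mult_distrib)
  also have "\<dots> \<le> C * r ^ k" using main r0 by (intro mult_right_mono) auto
  finally show ?thesis by (simp add: C_def q_def r_def x_def)
qed


lemma graphs_fin: "finite (graphs n)" by (simp add: graphs_def vpairs_fin)

lemma er_nonneg: "0 \<le> p \<Longrightarrow> p \<le> 1 \<Longrightarrow> 0 \<le> er_prob n p G"
  by (simp add: er_prob_def)

lemma er_total: "(\<Sum>G\<in>graphs n. er_prob n p G) = 1"
  unfolding graphs_def er_wt by (rule total_mass[OF vpairs_fin])

lemma deg_sum:
  assumes "G \<subseteq> vpairs n"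
  shows "real (card {e\<in>G. v \<in> e}) = (\<Sum>e\<in>Bv n v. if e \<in> G then 1 else 0)"
proof -
  have "{e\<in>G. v \<in> e} = Bv n v \<inter> G" using assms by (auto simp: Bv_def)
  then have "real (card {e\<in>G. v \<in> e}) = (\<Sum>e\<in>Bv n v \<inter> G. 1)" by simp
  also have "\<dots> = (\<Sum>e\<in>Bv n v. if e \<in> G then 1 else 0)"
    by (rule sum.inter_restrict[OF Bv_fin])
  finally show ?thesis .
qed

lemma termA:
  assumes n: "n \<ge> 2" and p: "0 < p" "p < 1" and t: "0 \<le> t" and v: "v \<in> {1..n}"
  shows "(\<Sum>G\<in>graphs n. er_prob n p G * ((real (num_isolated n (delete_incident G v)) - real (num_isolated n G))
            * exp (t * real (num_isolated n G))))
         \<le> (1 + (real n - 1) * p) * mgf_Y n p t"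
proof -
  define E where "E G = exp (t * real (num_isolated n G))" for G
  have "(\<Sum>G\<in>graphs n. er_prob n p G * ((real (num_isolated n (delete_incident G v)) - real (num_isolated n G)) * E G))
      \<le> (\<Sum>G\<in>graphs n. er_prob n p G * ((1 + (\<Sum>e\<in>Bv n v. if e \<in> G then 1 else 0)) * E G))"
  proof (rule sum_mono)
    fix G assume G: "G \<in> graphs n"
    then have Gs: "G \<subseteq> vpairs n" by (simp add: graphs_def)
    have fG: "finite G" using Gs vpairs_fin finite_subset by blast
    have "real (num_isolated n (delete_incident G v)) - real (num_isolated n G) \<le> 1 + real (card (Xs n G v))"
      using Y_del_le[OF Gs, of v] by simp
    also have "\<dots> \<le> 1 + real (card {e\<in>G. v \<in> e})" using Xs_card_le[OF fG, of n v] by simp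
    also have "\<dots> = 1 + (\<Sum>e\<in>Bv n v. if e \<in> G then 1 else 0)" using deg_sum[OF Gs] by simp
    finally have "(real (num_isolated n (delete_incident G v)) - real (num_isolated n G)) * E G
        \<le> (1 + (\<Sum>e\<in>Bv n v. if e \<in> G then 1 else 0)) * E G"
      by (intro mult_right_mono) (auto simp: E_def)
    then show "er_prob n p G * ((real (num_isolated n (delete_incident G v)) - real (num_isolated n G)) * E G)
        \<le> er_prob n p G * ((1 + (\<Sum>e\<in>Bv n v. if e \<in> G then 1 else 0)) * E G)"
      using p by (intro mult_left_mono er_nonneg) auto
  qed
  also have "\<dots> = (\<Sum>G\<in>graphs n. er_prob n p G * E G)
        + (\<Sum>e\<in>Bv n v. \<Sum>G\<in>graphs n. er_prob n p G * (if e \<in> G then E G else 0))"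
    by (simp add: algebra_simps sum.distrib sum_distrib_left sum_distrib_right sum.swap[of _ "Bv n v"] if_distrib cong: if_cong)
  also have "\<dots> \<le> (\<Sum>G\<in>graphs n. er_prob n p G * E G) + (\<Sum>e\<in>Bv n v. p * (\<Sum>G\<in>graphs n. er_prob n p G * E G))"
  proof (intro add_left_mono sum_mono)
    fix e assume e: "e \<in> Bv n v"
    then have ev: "e \<in> vpairs n" by (simp add: Bv_def)
    show "(\<Sum>G\<in>graphs n. er_prob n p G * (if e \<in> G then E G else 0)) \<le> p * (\<Sum>G\<in>graphs n. er_prob n p G * E G)"
      unfolding graphs_def er_wt
    proof (rule edge_le[OF vpairs_fin ev])
      fix H show "E (insert e H) \<le> E H" unfolding E_def using t
        by (intro exp_mono mult_left_mono) (auto intro: Y_anti)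
    qed (use p in auto)
  qed
  also have "\<dots> = (1 + (real n - 1) * p) * mgf_Y n p t"
    using card_Bv[OF v] n by (simp add: mgf_Y_def E_def algebra_simps of_nat_diff)
  finally show ?thesis by (simp add: E_def)
qed


lemma decompv':
  "(\<Sum>G\<in>graphs n. er_prob n p G * f G)
     = (\<Sum>H\<in>Pow (Av n v). wt p (Av n v) H * (\<Sum>S\<in>Pow (Bv n v). wt p (Bv n v) S * f (H\<union>S)))"
  unfolding decompv[of n p f v] by (simp add: sum_distrib_left mult.assoc)

lemma Xs_HS:
  assumes "H \<subseteq> Av n v" "S \<subseteq> Bv n v"
  shows "card (Xs n (H\<union>S) v) \<le> card (S \<inter> (\<lambda>u. {v,u}) ` (Iso n H - {v}))"
proof (rule card_inj_on_le[of "\<lambda>u. {v,u}"])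
  show "inj_on (\<lambda>u. {v, u}) (Xs n (H \<union> S) v)" by (auto simp: inj_on_def doubleton_eq_iff)
  show "finite (S \<inter> (\<lambda>u. {v, u}) ` (Iso n H - {v}))" by (simp add: Iso_fin)
  show "(\<lambda>u. {v, u}) ` Xs n (H \<union> S) v \<subseteq> S \<inter> (\<lambda>u. {v, u}) ` (Iso n H - {v})"
  proof
    fix e assume "e \<in> (\<lambda>u. {v, u}) ` Xs n (H \<union> S) v"
    then obtain u where u: "u \<in> Xs n (H \<union> S) v" "e = {v,u}" by blast
    then have u1: "u \<in> {1..n}" "u \<noteq> v" "{v,u} \<in> H \<union> S" "\<forall>e\<in>H \<union> S. u \<in> e \<longrightarrow> e = {v,u}"
      unfolding Xs_def by blast+
    have "{v,u} \<notin> H" using assms(1) by (auto simp: Av_def)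
    then have "{v,u} \<in> S" using u1 by blast
    moreover have "u \<in> Iso n H"
      unfolding Iso_def using u1 assms(1) by (auto simp: Av_def)
    ultimately show "e \<in> S \<inter> (\<lambda>u. {v, u}) ` (Iso n H - {v})" using u u1 by blast
  qed
qed

lemma termB:
  assumes n: "n \<ge> 2" and p: "0 < p" "p < 1" and t: "0 \<le> t" and v: "v \<in> {1..n}"
  shows "(\<Sum>G\<in>graphs n. er_prob n p G * ((real (num_isolated n (delete_incident G v)) - real (num_isolated n G))
            * exp (t * real (num_isolated n (delete_incident G v)))))
         \<le> exp t * ((p * exp t + 1 - p) ^ (n - 2) * (real n * p * exp t + 1 - p)) * mgf_Y n p t"
proof -
  define C where "C = (p * exp t + 1 - p) ^ (n - 2) * (real n * p * exp t + 1 - p)"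
  define r where "r = p * exp (-t) + 1 - p"
  define Y where "Y G = real (num_isolated n G)" for G
  define A where "A = Av n v"
  define B where "B = Bv n v"
  have HS: "H \<subseteq> A \<Longrightarrow> S \<subseteq> B \<Longrightarrow> H \<union> S \<subseteq> vpairs n" for H S
    by (auto simp: A_def B_def Av_def Bv_def)
  have inner: "(\<Sum>S\<in>Pow B. wt p B S * ((Y H - Y (H\<union>S)) * exp (t * Y H)))
      \<le> exp t * C * (\<Sum>S\<in>Pow B. wt p B S * exp (t * Y (H\<union>S)))" if H: "H \<subseteq> A" for H
  proof -
    define M where "M = (\<lambda>u. {v,u}) ` (Iso n H - {v})"
    have vH: "v \<in> Iso n H" using H v by (auto simp: Iso_def A_def Av_def)
    have MB: "M \<subseteq> B" using v by (auto simp: M_def B_def Bv_def Iso_def intro: pair_in)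
    have cM: "card M = card (Iso n H) - 1"
    proof -
      have "inj_on (\<lambda>u. {v,u}) (Iso n H - {v})" by (auto simp: inj_on_def doubleton_eq_iff)
      then have "card M = card (Iso n H - {v})" unfolding M_def by (rule card_image)
      then show ?thesis using vH by (simp add: Iso_fin)
    qed
    define k where "k = card M"
    have YH: "Y H = real k + 1"
    proof -
      have "card (Iso n H) \<ge> 1" using vH Iso_fin by (metis One_nat_def Suc_leI card_gt_0_iff empty_iff)
      then show ?thesis unfolding Y_def k_def cM num_iso by simp
    qed
    have kn: "k \<le> n - 1"
    proof -
      have "card (Iso n H) \<le> n" using card_mono[OF _ Iso_sub, of n H] by simp
      then show ?thesis unfolding k_def cM by simp
    qed
    have BM: "B \<inter> M = M" using MB by blast
    have fB: "finite B" by (simp add: B_def Bv_fin)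
    have w0: "0 \<le> wt p B S" for S using p by (intro wt_nonneg) auto
    have up: "Y H - Y (H\<union>S) \<le> 1 + real (card (S \<inter> M))" if S: "S \<subseteq> B" for S
    proof -
      have "Y H \<le> Y (H\<union>S) + 1 + real (card (Xs n (H\<union>S) v))"
        using Y_del_le[OF HS[OF H S], of v] del_HS[of H n v S] H S by (simp add: Y_def A_def B_def)
      moreover have "card (Xs n (H\<union>S) v) \<le> card (S \<inter> M)"
        using Xs_HS[of H n v S] H S by (simp add: A_def B_def M_def)
      ultimately show ?thesis by linarith
    qed
    have "(\<Sum>S\<in>Pow B. wt p B S * ((Y H - Y (H\<union>S)) * exp (t * Y H)))
        \<le> (\<Sum>S\<in>Pow B. wt p B S * ((1 + real (card (S \<inter> M))) * exp (t * Y H)))"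
      using up by (intro sum_mono mult_left_mono mult_right_mono w0) auto
    also have "\<dots> = exp (t * Y H) * ((\<Sum>S\<in>Pow B. wt p B S) + (\<Sum>S\<in>Pow B. wt p B S * real (card (S \<inter> M))))"
      by (simp add: sum_distrib_left sum.distrib algebra_simps)
    also have "\<dots> = exp (t * Y H) * (1 + p * k)"
      using total_mass[OF fB] count_formula[OF fB, of p M] BM by (simp add: k_def)
    also have "\<dots> = exp t * (exp (t * real k) * (1 + p * k))" by (simp add: YH algebra_simps exp_add)
    also have "\<dots> \<le> exp t * (exp (t * real k) * (C * r ^ k))"
      using key_scalar[OF n p t kn] by (intro mult_left_mono) (auto simp: C_def r_def)
    also have "\<dots> = exp t * C * (exp (t * real k) * (\<Sum>S\<in>Pow B. wt p B S * exp (-t) ^ card (S \<inter> M)))"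
      using prod_formula[OF fB, of p "exp (-t)" M] BM by (simp add: r_def k_def)
    also have "\<dots> \<le> exp t * C * (\<Sum>S\<in>Pow B. wt p B S * exp (t * Y (H\<union>S)))"
    proof -
      have "exp (t * real k) * (\<Sum>S\<in>Pow B. wt p B S * exp (-t) ^ card (S \<inter> M))
          \<le> (\<Sum>S\<in>Pow B. wt p B S * exp (t * Y (H\<union>S)))"
        unfolding sum_distrib_left
      proof (rule sum_mono)
        fix S assume "S \<in> Pow B"
        then have S: "S \<subseteq> B" by simp
        have "t * (real k - real (card (S \<inter> M))) \<le> t * Y (H\<union>S)"
          using up[OF S] YH t by (intro mult_left_mono) auto
        then have "exp (t * real k) * exp (-t) ^ card (S \<inter> M) \<le> exp (t * Y (H\<union>S))"
          by (simp add: exp_of_nat_mult[symmetric] exp_add[symmetric] algebra_simps)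
        then show "exp (t * real k) * (wt p B S * exp (-t) ^ card (S \<inter> M)) \<le> wt p B S * exp (t * Y (H\<union>S))"
          using w0[of S] by (simp add: mult_left_mono mult.left_commute)
      qed
      moreover have "0 \<le> exp t * C"
      proof -
        have "0 \<le> p * exp t + 1 - p" using p by (smt (verit) exp_gt_zero mult_pos_pos)
        moreover have "0 \<le> real n * p * exp t + 1 - p" using p by (smt (verit) exp_gt_zero mult_pos_pos of_nat_0_le_iff mult_nonneg_nonneg)
        ultimately show ?thesis by (simp add: C_def)
      qed
      ultimately have "(exp t * C) * (exp (t * real k) * (\<Sum>S\<in>Pow B. wt p B S * exp (-t) ^ card (S \<inter> M)))
          \<le> (exp t * C) * (\<Sum>S\<in>Pow B. wt p B S * exp (t * Y (H\<union>S)))" by (rule mult_left_mono)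
      then show ?thesis by (simp only: mult.assoc)
    qed
    finally show ?thesis .
  qed
  have "(\<Sum>G\<in>graphs n. er_prob n p G * ((Y (delete_incident G v) - Y G) * exp (t * Y (delete_incident G v))))
     = (\<Sum>H\<in>Pow A. wt p A H * (\<Sum>S\<in>Pow B. wt p B S * ((Y H - Y (H\<union>S)) * exp (t * Y H))))"
    unfolding decompv'[of n p _ v] A_def B_def
    by (intro sum.cong refl arg_cong[where f="\<lambda>x. _ * x"]) (auto simp: del_HS)
  also have "\<dots> \<le> (\<Sum>H\<in>Pow A. wt p A H * (exp t * C * (\<Sum>S\<in>Pow B. wt p B S * exp (t * Y (H\<union>S)))))"
    using inner p by (intro sum_mono mult_left_mono wt_nonneg) auto
  also have "\<dots> = exp t * C * mgf_Y n p t"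
    unfolding mgf_Y_def decompv'[of n p _ v] A_def B_def Y_def
    by (simp add: sum_distrib_left algebra_simps)
  finally show ?thesis by (simp add: Y_def C_def)
qed


lemma Ysum: "real (num_isolated n G) * c = (\<Sum>v\<in>{1..n}. if v \<in> Iso n G then c else 0)"
proof -
  have "(\<Sum>v\<in>{1..n}. if v \<in> Iso n G then c else 0) = (\<Sum>v\<in>{1..n} \<inter> Iso n G. c)"
    by (rule sum.inter_restrict[symmetric]) simp
  also have "{1..n} \<inter> Iso n G = Iso n G" using Iso_sub by blast
  finally show ?thesis by (simp add: num_iso)
qed

lemma deriv_id:
  assumes n: "n \<ge> 2"
  shows "(\<Sum>G\<in>graphs n. er_prob n p G * (real (num_isolated n G) * exp (t * real (num_isolated n G))))
       = (1 - p) ^ (n - 1) * (\<Sum>v\<in>{1..n}. \<Sum>G\<in>graphs n. er_prob n p G * exp (t * real (num_isolated n (delete_incident G v))))"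
proof -
  have "(\<Sum>G\<in>graphs n. er_prob n p G * (real (num_isolated n G) * exp (t * real (num_isolated n G))))
     = (\<Sum>v\<in>{1..n}. \<Sum>G\<in>graphs n. er_prob n p G * (if v \<in> Iso n G then exp (t * real (num_isolated n G)) else 0))"
    unfolding Ysum sum_distrib_left by (rule sum.swap)
  also have "\<dots> = (\<Sum>v\<in>{1..n}. (1 - p) ^ (n - 1) * (\<Sum>G\<in>graphs n. er_prob n p G * exp (t * real (num_isolated n (delete_incident G v)))))"
    by (intro sum.cong refl sizebias) auto
  finally show ?thesis by (simp add: sum_distrib_left)
qed

lemma Ys_eq: "mgf_Ys n p t = (1 / real n) * (\<Sum>v\<in>{1..n}. \<Sum>G\<in>graphs n. er_prob n p G * exp (t * real (num_isolated n (delete_incident G v))))"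
  unfolding mgf_Ys_def sum_distrib_left by (subst sum.swap) (simp add: algebra_simps)

lemma Y_eq: "n \<ge> 1 \<Longrightarrow> mgf_Y n p t = (1 / real n) * (\<Sum>v\<in>{1..n}. \<Sum>G\<in>graphs n. er_prob n p G * exp (t * real (num_isolated n G)))"
  unfolding mgf_Y_def by simp

lemma mean_eq:
  assumes n: "n \<ge> 2" shows "mean_Y n p = (1 - p) ^ (n - 1) * real n"
proof -
  have "mean_Y n p = (\<Sum>G\<in>graphs n. er_prob n p G * (real (num_isolated n G) * exp (0 * real (num_isolated n G))))"
    by (simp add: mean_Y_def)
  also have "\<dots> = (1 - p) ^ (n - 1) * real n"
    unfolding deriv_id[OF n] by (simp add: er_total)
  finally show ?thesis .
qed

lemma mgf_deriv:
  assumes n: "n \<ge> 2"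
  shows "deriv (mgf_Y n p) t = mean_Y n p * mgf_Ys n p t"
proof -
  have D: "DERIV (mgf_Y n p) t :> (\<Sum>G\<in>graphs n. er_prob n p G * (real (num_isolated n G) * exp (t * real (num_isolated n G))))"
    unfolding mgf_Y_def[abs_def]
    by (rule DERIV_sum) (auto intro!: derivative_eq_intros)
  show ?thesis
    unfolding DERIV_imp_deriv[OF D] deriv_id[OF n] mean_eq[OF n] Ys_eq using n by simp
qed


lemma pos_part:
  assumes n: "n \<ge> 2" and p: "0 < p" "p < 1" and t: "0 \<le> t"
  shows "mgf_Ys n p t - mgf_Y n p t \<le> t * gamma_theta n p t / 2 * mgf_Y n p t"
proof -
  define Y where "Y G = real (num_isolated n G)" for G
  have n1: "n \<ge> 1" using n by simp
  define D where "D v = (\<Sum>G\<in>graphs n. er_prob n p G * (exp (t * Y (delete_incident G v)) - exp (t * Y G)))" for v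
  have eq: "mgf_Ys n p t - mgf_Y n p t = (1 / real n) * (\<Sum>v\<in>{1..n}. D v)"
  proof -
    have "mgf_Ys n p t - mgf_Y n p t = (1 / real n) * (\<Sum>v\<in>{1..n}. \<Sum>G\<in>graphs n. er_prob n p G * exp (t * Y (delete_incident G v)))
        - (1 / real n) * (\<Sum>v\<in>{1..n}. \<Sum>G\<in>graphs n. er_prob n p G * exp (t * Y G))"
      unfolding Ys_eq Y_eq[OF n1] Y_def by simp
    also have "\<dots> = (1 / real n) * (\<Sum>v\<in>{1..n}. D v)"
      unfolding right_diff_distrib[symmetric] sum_subtractf[symmetric] D_def
      by (simp only: right_diff_distrib sum_subtractf)
    finally show ?thesis .
  qed
  have Dv: "D v \<le> t * gamma_theta n p t / 2 * mgf_Y n p t" if v: "v \<in> {1..n}" for v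
  proof -
    have "D v \<le> (\<Sum>G\<in>graphs n. er_prob n p G * (t / 2 * (((Y (delete_incident G v) - Y G) * exp (t * Y G))
                  + ((Y (delete_incident G v) - Y G) * exp (t * Y (delete_incident G v))))))"
      unfolding D_def
    proof (intro sum_mono mult_left_mono er_nonneg)
      fix G
      have "t * Y G \<le> t * Y (delete_incident G v)" using t Y_del_ge[of n G v]
        by (intro mult_left_mono) (auto simp: Y_def)
      from exp_conv2[OF this]
      show "exp (t * Y (delete_incident G v)) - exp (t * Y G) \<le> t / 2 * (((Y (delete_incident G v) - Y G) * exp (t * Y G))
                  + ((Y (delete_incident G v) - Y G) * exp (t * Y (delete_incident G v))))"
        by (simp add: algebra_simps)
    qed (use p in auto)
    also have "\<dots> = t / 2 * ((\<Sum>G\<in>graphs n. er_prob n p G * ((Y (delete_incident G v) - Y G) * exp (t * Y G)))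
        + (\<Sum>G\<in>graphs n. er_prob n p G * ((Y (delete_incident G v) - Y G) * exp (t * Y (delete_incident G v)))))"
      unfolding sum.distrib[symmetric] sum_distrib_left by (rule sum.cong) (simp_all add: algebra_simps)
    also have "\<dots> \<le> t / 2 * ((1 + (real n - 1) * p) * mgf_Y n p t
        + exp t * ((p * exp t + 1 - p) ^ (n - 2) * (real n * p * exp t + 1 - p)) * mgf_Y n p t)"
      using termA[OF n p t v] termB[OF n p t v] t unfolding Y_def
      by (intro mult_left_mono add_mono) auto
    also have "\<dots> = t * gamma_theta n p t / 2 * mgf_Y n p t"
      by (simp add: gamma_theta_def algebra_simps)
    finally show ?thesis .
  qed
  have "(1 / real n) * (\<Sum>v\<in>{1..n}. D v) \<le> (1 / real n) * (\<Sum>v\<in>{1..n}. t * gamma_theta n p t / 2 * mgf_Y n p t)"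
    using Dv by (intro mult_left_mono sum_mono) auto
  also have "\<dots> = t * gamma_theta n p t / 2 * mgf_Y n p t" using n by simp
  finally show ?thesis using eq by simp
qed

lemma neg_part:
  assumes n: "n \<ge> 2" and p: "0 < p" "p < 1" and t: "t < 0"
  shows "mgf_Y n p t - mgf_Ys n p t \<le> 2 * \<bar>t\<bar> * mgf_Y n p t"
proof -
  define Y where "Y G = real (num_isolated n G)" for G
  have n1: "n \<ge> 1" using n by simp
  have eq: "mgf_Y n p t - mgf_Ys n p t = (1 / real n) * (\<Sum>G\<in>graphs n. er_prob n p G *
        (\<Sum>v\<in>{1..n}. exp (t * Y G) - exp (t * Y (delete_incident G v))))"
  proof -
    have "mgf_Y n p t - mgf_Ys n p t = (1 / real n) * (\<Sum>v\<in>{1..n}. \<Sum>G\<in>graphs n. er_prob n p G * exp (t * Y G))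
        - (1 / real n) * (\<Sum>v\<in>{1..n}. \<Sum>G\<in>graphs n. er_prob n p G * exp (t * Y (delete_incident G v)))"
      unfolding Ys_eq Y_eq[OF n1] Y_def by simp
    also have "\<dots> = (1 / real n) * (\<Sum>v\<in>{1..n}. \<Sum>G\<in>graphs n. er_prob n p G * (exp (t * Y G) - exp (t * Y (delete_incident G v))))"
      unfolding right_diff_distrib[symmetric] sum_subtractf[symmetric]
      by (simp only: right_diff_distrib sum_subtractf)
    also have "\<dots> = (1 / real n) * (\<Sum>G\<in>graphs n. \<Sum>v\<in>{1..n}. er_prob n p G * (exp (t * Y G) - exp (t * Y (delete_incident G v))))"
      by (subst sum.swap) (rule refl)
    also have "\<dots> = (1 / real n) * (\<Sum>G\<in>graphs n. er_prob n p G *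
        (\<Sum>v\<in>{1..n}. exp (t * Y G) - exp (t * Y (delete_incident G v))))"
      by (simp only: sum_distrib_left)
    finally show ?thesis .
  qed
  have pt: "(\<Sum>v\<in>{1..n}. exp (t * Y G) - exp (t * Y (delete_incident G v))) \<le> (-t) * exp (t * Y G) * (2 * real n)"
    if G: "G \<in> graphs n" for G
  proof -
    have Gs: "G \<subseteq> vpairs n" using G by (simp add: graphs_def)
    have "(\<Sum>v\<in>{1..n}. exp (t * Y G) - exp (t * Y (delete_incident G v)))
        \<le> (\<Sum>v\<in>{1..n}. (-t) * exp (t * Y G) * (Y (delete_incident G v) - Y G))"
    proof (rule sum_mono)
      fix v
      have "1 + t * (Y (delete_incident G v) - Y G) \<le> exp (t * (Y (delete_incident G v) - Y G))"
        by (rule exp_ge_add_one_self)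
      then have "exp (t * Y G) * (1 + t * (Y (delete_incident G v) - Y G)) \<le> exp (t * Y G) * exp (t * (Y (delete_incident G v) - Y G))"
        by (intro mult_left_mono) auto
      also have "\<dots> = exp (t * Y (delete_incident G v))" by (simp add: exp_add[symmetric] algebra_simps)
      finally show "exp (t * Y G) - exp (t * Y (delete_incident G v)) \<le> (-t) * exp (t * Y G) * (Y (delete_incident G v) - Y G)"
        by (simp add: algebra_simps)
    qed
    also have "\<dots> = (-t) * exp (t * Y G) * (\<Sum>v\<in>{1..n}. Y (delete_incident G v) - Y G)"
      by (simp add: sum_distrib_left)
    also have "\<dots> \<le> (-t) * exp (t * Y G) * (2 * real n)"
    proof (rule mult_left_mono)
      have "(\<Sum>v\<in>{1..n}. Y (delete_incident G v) - Y G) \<le> (\<Sum>v\<in>{1..n}. 1 + real (card (Xs n G v)))"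
      proof (rule sum_mono)
        fix v show "Y (delete_incident G v) - Y G \<le> 1 + real (card (Xs n G v))"
          using Y_del_le[OF Gs, of v] unfolding Y_def by linarith
      qed
      also have "\<dots> = real n + real (\<Sum>v\<in>{1..n}. card (Xs n G v))" by (simp add: sum.distrib)
      also have "\<dots> \<le> real n + real n" using Xs_sum_le[OF Gs] of_nat_le_iff by (metis add_left_mono)
      finally show "(\<Sum>v\<in>{1..n}. Y (delete_incident G v) - Y G) \<le> 2 * real n" by simp
    qed (use t in \<open>simp add: mult_nonpos_nonneg less_imp_le\<close>)
    finally show ?thesis .
  qed
  have "(1 / real n) * (\<Sum>G\<in>graphs n. er_prob n p G * (\<Sum>v\<in>{1..n}. exp (t * Y G) - exp (t * Y (delete_incident G v))))
      \<le> (1 / real n) * (\<Sum>G\<in>graphs n. er_prob n p G * ((-t) * exp (t * Y G) * (2 * real n)))"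
    using pt p by (intro mult_left_mono sum_mono er_nonneg) auto
  also have "\<dots> = 2 * \<bar>t\<bar> * mgf_Y n p t"
    using n t by (simp add: mgf_Y_def Y_def sum_distrib_left algebra_simps)
  finally show ?thesis using eq by simp
qed


theorem mainTheorem6:
  fixes n :: nat and p :: real
  assumes "n \<ge> 2" and "0 < p" and "p < 1"
  shows "(\<forall>\<theta>::real. \<theta> \<ge> 0 \<longrightarrow>
            mgf_Ys n p \<theta> - mgf_Y n p \<theta> \<le> \<theta> * gamma_theta n p \<theta> / 2 * mgf_Y n p \<theta>
          \<and> deriv (mgf_Y n p) \<theta> \<le> mean_Y n p * (1 + \<theta> * gamma_theta n p \<theta> / 2) * mgf_Y n p \<theta>)
       \<and> (\<forall>\<theta>::real. \<theta> < 0 \<longrightarrow>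
            mgf_Y n p \<theta> - mgf_Ys n p \<theta> \<le> 2 * \<bar>\<theta>\<bar> * mgf_Y n p \<theta>
          \<and> deriv (mgf_Y n p) \<theta> \<ge> mean_Y n p * (1 + 2 * \<theta>) * mgf_Y n p \<theta>)"
proof -
  have m0: "0 \<le> mean_Y n p" unfolding mean_eq[OF assms(1)] using assms by simp
  show ?thesis
  proof (intro conjI allI impI)
    fix t :: real assume t: "0 \<le> t"
    show A: "mgf_Ys n p t - mgf_Y n p t \<le> t * gamma_theta n p t / 2 * mgf_Y n p t"
      by (rule pos_part[OF assms t])
    have "deriv (mgf_Y n p) t = mean_Y n p * mgf_Ys n p t" by (rule mgf_deriv[OF assms(1)])
    also have "\<dots> \<le> mean_Y n p * (mgf_Y n p t + t * gamma_theta n p t / 2 * mgf_Y n p t)"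
      using A m0 by (intro mult_left_mono) auto
    finally show "deriv (mgf_Y n p) t \<le> mean_Y n p * (1 + t * gamma_theta n p t / 2) * mgf_Y n p t"
      by (simp add: algebra_simps)
  next
    fix t :: real assume t: "t < 0"
    show A: "mgf_Y n p t - mgf_Ys n p t \<le> 2 * \<bar>t\<bar> * mgf_Y n p t"
      by (rule neg_part[OF assms t])
    have "mean_Y n p * (1 + 2 * t) * mgf_Y n p t = mean_Y n p * (mgf_Y n p t - 2 * \<bar>t\<bar> * mgf_Y n p t)"
      using t by (simp add: algebra_simps)
    also have "\<dots> \<le> mean_Y n p * mgf_Ys n p t"
      using A m0 by (intro mult_left_mono) auto
    also have "\<dots> = deriv (mgf_Y n p) t" by (rule mgf_deriv[OF assms(1), symmetric])
    finally show "deriv (mgf_Y n p) t \<ge> mean_Y n p * (1 + 2 * t) * mgf_Y n p t" .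
  qed
qed

end
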